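(* Let $\beta>1/2$ and let $X$ be a random variable with density $f_\beta(x)=C_\beta(1+x^2)^{-\beta}$, $x\in\mathbb R$. Then for every smooth $\phi:\mathbb R\to\mathbb R$ such that $\phi(X)$ has finite variance, $$\mathrm{Var}[\phi(X)]\le \frac{1}{\rho(\beta)}\,E\big\{(1+X^2)[\phi'(X)]^2\big\},\qquad \rho(\beta)=\begin{cases}(\beta-\tfrac12)^2, & \tfrac12<\beta\le\tfrac32,\\ 2(\beta-1), & \beta>\tfrac32.\end{cases}$$
   Context: $C_\beta>0$ is the normalizing constant making $f_\beta$ a probability density on $\mathbb R$. $\mathrm{Var}[\phi(X)]=E[\phi(X)^2]-(E[\phi(X)])^2$. *)

theory Defs
  imports "HOL-Probability.Probability"
begin

definition C_beta :: "real \<Rightarrow> real" where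
  "C_beta \<beta> = 1 / (\<integral>x. (1 + x\<^sup>2) powr (- \<beta>) \<partial>lborel)"

definition f_beta :: "real \<Rightarrow> real \<Rightarrow> real" where
  "f_beta \<beta> x = C_beta \<beta> * (1 + x\<^sup>2) powr (- \<beta>)"

definition rho :: "real \<Rightarrow> real" where
  "rho \<beta> = (if \<beta> \<le> 3/2 then (\<beta> - 1/2)\<^sup>2 else 2 * (\<beta> - 1))"

definition smooth_fun :: "(real \<Rightarrow> real) \<Rightarrow> bool" where
  "smooth_fun \<phi> \<longleftrightarrow> (\<forall>n x. ((deriv ^^ n) \<phi>) differentiable (at x))"

end

theory Submission
  imports Defs
begin

lemma key_alg:
  fixes x w P f d a b c :: real
  assumes x: "x > 0" and w: "w = 1 + x^2" and P: "P > 0"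
    and Q: "0 \<le> (1+a*x^2)*(2*b+1-a) - (c+2*a)*w"
  shows "0 \<le> w*P*d^2 - c*P*f^2 - (((2*a*x*P + (1+a*x^2)*(-2*b*x*P/w))*f^2 + (1+a*x^2)*P*(2*f*d))/x - (1+a*x^2)*P*f^2/x^2)"
proof -
  have wp: "w > 0" using w by (simp add: add_pos_nonneg)
  define Qv where "Qv = (1+a*x^2)*(2*b+1-a) - (c+2*a)*w"
  have eq: "w*P*d^2 - c*P*f^2 - (((2*a*x*P + (1+a*x^2)*(-2*b*x*P/w))*f^2 + (1+a*x^2)*P*(2*f*d))/x - (1+a*x^2)*P*f^2/x^2)
     = P/(w*x^2) * ((w*x*d - (1+a*x^2)*f)^2 + f^2*x^2*Qv)"
  proof -
    have xn: "x \<noteq> 0" using x by simp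
    have wn: "w \<noteq> 0" using wp by simp
    show ?thesis
      using xn wn unfolding Qv_def
      apply (simp add: field_simps)
      apply (simp add: w power2_eq_square)
      apply algebra
      done
  qed
  have "0 \<le> P/(w*x^2) * ((w*x*d - (1+a*x^2)*f)^2 + f^2*x^2*Qv)"
    using x wp P Q unfolding Qv_def by (intro mult_nonneg_nonneg add_nonneg_nonneg) auto
  then show ?thesis using eq by simp
qed

lemma Q_nonneg:
  fixes \<beta> x :: real
  assumes "\<beta> > 1/2"
  defines "a \<equiv> (if \<beta> \<le> 3/2 then \<beta> - 1/2 else 1)"
  shows "0 \<le> (1+a*x^2)*(2*\<beta>+1-a) - (rho \<beta>+2*a)*(1+x^2)"
proof (cases "\<beta> \<le> 3/2")
  case True
  have "(1+a*x^2)*(2*\<beta>+1-a) - (rho \<beta>+2*a)*(1+x^2) = 9/4 - \<beta>^2"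
    using True unfolding a_def rho_def by (simp add: field_simps power2_eq_square)
  moreover have "\<beta>^2 \<le> (3/2)^2" using True assms by (intro power_mono) auto
  ultimately show ?thesis by (simp add: power2_eq_square)
next
  case False
  then show ?thesis unfolding a_def rho_def by (simp add: algebra_simps)
qed

lemma half_line:
  fixes f f' :: "real \<Rightarrow> real" and \<beta> R :: real
  assumes \<beta>: "\<beta> > 1/2" and R: "0 \<le> R"
    and der: "\<And>x. (f has_real_derivative f' x) (at x)"
    and cont: "continuous_on UNIV f'"
    and f0: "f 0 = 0"
  shows "integral {0..R} (\<lambda>x. rho \<beta> * ((1+x^2) powr (-\<beta>) * (f x)^2))
       \<le> integral {0..R} (\<lambda>x. (1+x^2) * (1+x^2) powr (-\<beta>) * (f' x)^2)"
proof -
  define a where "a = (if \<beta> \<le> 3/2 then \<beta> - 1/2 else 1)"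
  have a0: "a > 0" using \<beta> unfolding a_def by auto
  define P where "P x = (1+x^2) powr (-\<beta>)" for x :: real
  define G where "G x = (1+a*x^2)*P x*(f x)^2/x" for x :: real
  define D where "D x = (((2*a*x*P x + (1+a*x^2)*(-2*\<beta>*x*P x/(1+x^2)))*(f x)^2 + (1+a*x^2)*P x*(2*f x*f' x))/x - (1+a*x^2)*P x*(f x)^2/x^2)" for x :: real
  have wpos: "0 < 1 + x^2" for x :: real by (simp add: add_pos_nonneg)
  have Ppos: "P x > 0" for x unfolding P_def using wpos[of x] by simp
  have Pder: "(P has_real_derivative (-2*\<beta>*x*P x/(1+x^2))) (at x)" for x
  proof -
    have "((\<lambda>x. (1+x^2) powr (-\<beta>)) has_real_derivative (-\<beta>) * (1+x^2) powr (-\<beta> - of_nat 1) * (2*x)) (at x)"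
      by (rule DERIV_fun_powr) (auto intro!: derivative_eq_intros simp: wpos)
    moreover have "(1+x^2) powr (-\<beta> - of_nat 1) = P x / (1+x^2)"
      unfolding P_def using wpos[of x] by (simp add: powr_diff)
    ultimately show ?thesis unfolding P_def[abs_def] by (simp add: field_simps)
  qed
  have Gder: "(G has_real_derivative D x) (at x)" if x: "x \<noteq> 0" for x
    unfolding G_def[abs_def] D_def
    apply (rule DERIV_cong)
     apply (rule derivative_intros Pder der)+
    using x apply simp
    using x by (simp add: field_simps power2_eq_square)
  have fc: "isCont f x" for x using der by (rule DERIV_isCont)
  have Pc: "isCont P x" for x using Pder by (rule DERIV_isCont)
  have G0: "G 0 = 0" unfolding G_def by simp
  have Gc0: "isCont G 0"
  proof -
    have Geq: "G = (\<lambda>x. ((1+a*x^2)*P x*f x) * (f x / x))"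
      unfolding G_def by (auto simp: power2_eq_square)
    have l1: "((\<lambda>x. (1+a*x^2)*P x*f x) \<longlongrightarrow> (1+a*0^2)*P 0*f 0) (at 0)"
      by (intro tendsto_intros isCont_tendsto_compose[OF Pc] isCont_tendsto_compose[OF fc] tendsto_ident_at)
    have "((\<lambda>y. (f y - f 0) / (y - 0)) \<longlongrightarrow> f' 0) (at 0)"
      using der[of 0] by (simp add: has_field_derivative_iff)
    then have l2: "((\<lambda>x. f x / x) \<longlongrightarrow> f' 0) (at 0)" using f0 by simp
    have "(G \<longlongrightarrow> 0) (at 0)" unfolding Geq using tendsto_mult[OF l1 l2] f0 by simp
    then show ?thesis using G0 by (simp add: isCont_def)
  qed
  have Gcont: "continuous_on {0..R} G"
    by (intro continuous_at_imp_continuous_on ballI, case_tac "x = 0")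
       (use Gc0 Gder DERIV_isCont in auto)
  have ftc: "(D has_integral (G R - G 0)) {0..R}"
    using R Gcont by (intro fundamental_theorem_of_calculus_interior)
      (auto simp: has_real_derivative_iff_has_vector_derivative[symmetric] intro!: Gder)
  have f'c: "isCont f' x" for x using cont by (simp add: continuous_on_eq_continuous_at)
  have i1: "(\<lambda>x. (1+x^2) * (1+x^2) powr (-\<beta>) * (f' x)^2) integrable_on {0..R}"
    unfolding P_def[symmetric]
    by (intro integrable_continuous_interval continuous_at_imp_continuous_on ballI continuous_intros Pc f'c)
  have i2: "(\<lambda>x. rho \<beta> * ((1+x^2) powr (-\<beta>) * (f x)^2)) integrable_on {0..R}"
    unfolding P_def[symmetric]
    by (intro integrable_continuous_interval continuous_at_imp_continuous_on ballI continuous_intros Pc fc)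
  have hi: "((\<lambda>x. (1+x^2) * (1+x^2) powr (-\<beta>) * (f' x)^2 - rho \<beta> * ((1+x^2) powr (-\<beta>) * (f x)^2) - D x) has_integral
     (integral {0..R} (\<lambda>x. (1+x^2) * (1+x^2) powr (-\<beta>) * (f' x)^2) - integral {0..R} (\<lambda>x. rho \<beta> * ((1+x^2) powr (-\<beta>) * (f x)^2)) - (G R - G 0))) {0..R}"
    by (intro has_integral_diff ftc integrable_integral i1 i2)
  have nn: "0 \<le> (1+x^2) * (1+x^2) powr (-\<beta>) * (f' x)^2 - rho \<beta> * ((1+x^2) powr (-\<beta>) * (f x)^2) - D x"
    if x: "x \<in> {0..R}" for x
  proof (cases "x = 0")
    case True
    then show ?thesis using f0 D_def by (simp add: add_pos_nonneg)
  next
    case False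
    then have xp: "x > 0" using x by auto
    have "0 \<le> (1+x^2)*P x*(f' x)^2 - rho \<beta>*P x*(f x)^2 - (((2*a*x*P x + (1+a*x^2)*(-2*\<beta>*x*P x/(1+x^2)))*(f x)^2 + (1+a*x^2)*P x*(2*f x*f' x))/x - (1+a*x^2)*P x*(f x)^2/x^2)"
      by (rule key_alg[OF xp refl Ppos]) (use Q_nonneg[OF \<beta>, of x] in \<open>simp add: a_def\<close>)
    then show ?thesis unfolding D_def P_def by (simp add: mult.assoc)
  qed
  have "0 \<le> integral {0..R} (\<lambda>x. (1+x^2) * (1+x^2) powr (-\<beta>) * (f' x)^2) - integral {0..R} (\<lambda>x. rho \<beta> * ((1+x^2) powr (-\<beta>) * (f x)^2)) - (G R - G 0)"
    by (rule has_integral_nonneg[OF hi nn])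
  moreover have "G R \<ge> 0" unfolding G_def using R a0 Ppos[of R]
    by (intro divide_nonneg_nonneg mult_nonneg_nonneg) (auto intro: add_nonneg_nonneg)
  ultimately show ?thesis using G0 by simp
qed

lemma rho_pos: "\<beta> > 1/2 \<Longrightarrow> rho \<beta> > 0"
  unfolding rho_def by auto

lemma whole_line:
  fixes f f' :: "real \<Rightarrow> real" and \<beta> R :: real
  assumes \<beta>: "\<beta> > 1/2" and R: "0 \<le> R"
    and der: "\<And>x. (f has_real_derivative f' x) (at x)"
    and cont: "continuous_on UNIV f'"
    and f0: "f 0 = 0"
  shows "integral {-R..R} (\<lambda>x. rho \<beta> * ((1+x^2) powr (-\<beta>) * (f x)^2))
       \<le> integral {-R..R} (\<lambda>x. (1+x^2) * (1+x^2) powr (-\<beta>) * (f' x)^2)"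
proof -
  define h1 where "h1 x = rho \<beta> * ((1+x^2) powr (-\<beta>) * (f x)^2)" for x
  define h2 where "h2 x = (1+x^2) * (1+x^2) powr (-\<beta>) * (f' x)^2" for x
  have a: "integral {0..R} h1 \<le> integral {0..R} h2"
    unfolding h1_def h2_def by (rule half_line[OF \<beta> R der cont f0])
  have der2: "((\<lambda>x. f (-x)) has_real_derivative (- f' (-x))) (at x)" for x
  proof -
    have u: "(uminus has_real_derivative (-1)) (at x)" by (auto intro!: derivative_eq_intros)
    show ?thesis using DERIV_chain2[where f=f and g=uminus, OF der[of "-x"] u] by simp
  qed
  have cont2: "continuous_on UNIV (\<lambda>x. - f' (-x))"
    by (intro continuous_intros continuous_on_compose2[OF cont]) auto
  have "integral {0..R} (\<lambda>x. rho \<beta> * ((1+x^2) powr (-\<beta>) * (f (-x))^2))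
       \<le> integral {0..R} (\<lambda>x. (1+x^2) * (1+x^2) powr (-\<beta>) * (- f' (-x))^2)"
    by (rule half_line[OF \<beta> R der2 cont2]) (simp add: f0)
  also have "integral {0..R} (\<lambda>x. rho \<beta> * ((1+x^2) powr (-\<beta>) * (f (-x))^2)) = integral {-R..0} h1"
  proof -
    have e: "(\<lambda>x. h1 (-x)) = (\<lambda>x. rho \<beta> * ((1+x^2) powr (-\<beta>) * (f (-x))^2))" by (simp add: h1_def)
    have "integral {-0..- (-R)} (\<lambda>x. h1 (-x)) = integral {-R..0} h1"
      by (rule Henstock_Kurzweil_Integration.integral_reflect_real)
    then show ?thesis by (simp only: e minus_zero minus_minus)
  qed
  also have "integral {0..R} (\<lambda>x. (1+x^2) * (1+x^2) powr (-\<beta>) * (- f' (-x))^2) = integral {-R..0} h2"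
  proof -
    have e: "(\<lambda>x. h2 (-x)) = (\<lambda>x. (1+x^2) * (1+x^2) powr (-\<beta>) * (- f' (-x))^2)" by (simp add: h2_def)
    have "integral {-0..- (-R)} (\<lambda>x. h2 (-x)) = integral {-R..0} h2"
      by (rule Henstock_Kurzweil_Integration.integral_reflect_real)
    then show ?thesis by (simp only: e minus_zero minus_minus)
  qed
  finally have b: "integral {-R..0} h1 \<le> integral {-R..0} h2" .
  have fc: "isCont f x" for x using der by (rule DERIV_isCont)
  have f'c: "isCont f' x" for x using cont by (simp add: continuous_on_eq_continuous_at)
  have Pc: "isCont (\<lambda>x. (1+x^2) powr (-\<beta>)) x" for x
    by (intro continuous_intros) (smt (verit) zero_le_power2)+
  have i1: "h1 integrable_on {-R..R}" unfolding h1_def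
    by (intro integrable_continuous_interval continuous_at_imp_continuous_on ballI continuous_intros isCont_o2[OF _ Pc] fc) (smt (verit) zero_le_power2)+
  have i2: "h2 integrable_on {-R..R}" unfolding h2_def
    by (intro integrable_continuous_interval continuous_at_imp_continuous_on ballI continuous_intros f'c) (smt (verit) zero_le_power2)+
  have "integral {-R..R} h1 = integral {-R..0} h1 + integral {0..R} h1"
    using Henstock_Kurzweil_Integration.integral_combine[where a="-R" and c=0 and b=R and f=h1] R i1 by simp
  moreover have "integral {-R..R} h2 = integral {-R..0} h2 + integral {0..R} h2"
    using Henstock_Kurzweil_Integration.integral_combine[where a="-R" and c=0 and b=R and f=h2] R i2 by simp
  ultimately show ?thesis using a b unfolding h1_def[symmetric] h2_def[symmetric] by simp
qed

lemma nn_interval: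
  fixes h :: "real \<Rightarrow> real"
  assumes c: "continuous_on UNIV h" and nn: "\<And>x. 0 \<le> h x"
  shows "(\<integral>\<^sup>+x. ennreal (h x * indicator {a..b} x) \<partial>lborel) = ennreal (integral {a..b} h)"
proof -
  have int: "h integrable_on {a..b}"
    by (rule integrable_continuous_interval) (rule continuous_on_subset[OF c], auto)
  have "((\<lambda>x. h x * indicator {a..b} x) has_integral integral {a..b} h) UNIV"
  proof -
    have "(\<lambda>x. h x * indicator {a..b} x) = (\<lambda>x. if x \<in> {a..b} then h x else 0)"
      by (auto simp: indicator_def)
    then show ?thesis using integrable_integral[OF int] has_integral_restrict_UNIV[of "{a..b}" h] by simp
  qed
  then show ?thesis
    by (subst nn_integral_has_integral_lborel[of "\<lambda>x. h x * indicator {a..b} x"])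
       (auto intro!: borel_measurable_times[OF borel_measurable_continuous_onI[OF c] borel_measurable_indicator] mult_nonneg_nonneg nn)
qed

lemma integral_cmul_real: "integral S (\<lambda>x. (c::real) * f x) = c * integral S f"
  using integral_cmul[of S c f] by simp

lemma nn_main:
  fixes f f' :: "real \<Rightarrow> real" and \<beta> C :: real
  assumes \<beta>: "\<beta> > 1/2"
    and der: "\<And>x. (f has_real_derivative f' x) (at x)"
    and cont: "continuous_on UNIV f'"
    and f0: "f 0 = 0" and C: "0 \<le> C"
  shows "(\<integral>\<^sup>+x. ennreal (C * ((1+x^2) powr (-\<beta>) * (f x)^2)) \<partial>lborel)
     \<le> ennreal (1 / rho \<beta>) * (\<integral>\<^sup>+x. ennreal (C * ((1+x^2) * (1+x^2) powr (-\<beta>) * (f' x)^2)) \<partial>lborel)"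
proof -
  define g1 where "g1 x = C * ((1+x^2) powr (-\<beta>) * (f x)^2)" for x
  define g2 where "g2 x = C * ((1+x^2) * (1+x^2) powr (-\<beta>) * (f' x)^2)" for x
  have rp: "rho \<beta> > 0" using rho_pos[OF \<beta>] .
  have fc: "isCont f x" for x using der by (rule DERIV_isCont)
  have f'c: "isCont f' x" for x using cont by (simp add: continuous_on_eq_continuous_at)
  have Pc: "isCont (\<lambda>x. (1+x^2) powr (-\<beta>)) x" for x
    by (intro continuous_intros) (smt (verit) zero_le_power2)+
  have c1: "continuous_on UNIV g1" unfolding g1_def
    by (intro continuous_at_imp_continuous_on ballI continuous_intros isCont_o2[OF _ Pc] fc) (smt (verit) zero_le_power2)+
  have c2: "continuous_on UNIV g2" unfolding g2_def
    by (intro continuous_at_imp_continuous_on ballI continuous_intros f'c) (smt (verit) zero_le_power2)+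
  have n1: "0 \<le> g1 x" for x unfolding g1_def using C by simp
  have n2: "0 \<le> g2 x" for x unfolding g2_def using C by (simp add: add_nonneg_nonneg)
  define RHS where "RHS = ennreal (1 / rho \<beta>) * (\<integral>\<^sup>+x. ennreal (g2 x) \<partial>lborel)"
  have step: "(\<integral>\<^sup>+x. ennreal (g1 x * indicator {-real n..real n} x) \<partial>lborel) \<le> RHS" for n :: nat
  proof -
    have w: "integral {-real n..real n} (\<lambda>x. rho \<beta> * ((1+x^2) powr (-\<beta>) * (f x)^2))
       \<le> integral {-real n..real n} (\<lambda>x. (1+x^2) * (1+x^2) powr (-\<beta>) * (f' x)^2)"
      by (rule whole_line[OF \<beta> _ der cont f0]) simp
    have "integral {-real n..real n} g1 \<le> (1 / rho \<beta>) * integral {-real n..real n} g2"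
    proof -
      have "integral {-real n..real n} g1 = C / rho \<beta> * integral {-real n..real n} (\<lambda>x. rho \<beta> * ((1+x^2) powr (-\<beta>) * (f x)^2))"
        unfolding g1_def integral_cmul_real using rp by simp
      also have "\<dots> \<le> C / rho \<beta> * integral {-real n..real n} (\<lambda>x. (1+x^2) * (1+x^2) powr (-\<beta>) * (f' x)^2)"
        using w C rp by (intro mult_left_mono) auto
      also have "\<dots> = (1 / rho \<beta>) * integral {-real n..real n} g2"
        unfolding g2_def integral_cmul_real by simp
      finally show ?thesis .
    qed
    then have "ennreal (integral {-real n..real n} g1) \<le> ennreal (1 / rho \<beta>) * ennreal (integral {-real n..real n} g2)"
      using rp by (subst ennreal_mult'[symmetric]) (auto intro: ennreal_leI)
    also have "ennreal (integral {-real n..real n} g2) = (\<integral>\<^sup>+x. ennreal (g2 x * indicator {-real n..real n} x) \<partial>lborel)"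
      by (rule nn_interval[OF c2 n2, symmetric])
    also have "\<dots> \<le> (\<integral>\<^sup>+x. ennreal (g2 x) \<partial>lborel)"
      by (intro nn_integral_mono ennreal_leI) (auto simp: indicator_def n2)
    finally show ?thesis unfolding RHS_def nn_interval[OF c1 n1]
      by (simp add: mult_left_mono)
  qed
  have sup: "(SUP n::nat. ennreal (g1 x * indicator {-real n..real n} x)) = ennreal (g1 x)" for x
  proof (rule antisym)
    show "(SUP n::nat. ennreal (g1 x * indicator {-real n..real n} x)) \<le> ennreal (g1 x)"
      by (intro SUP_least ennreal_leI) (auto simp: indicator_def n1)
    have "ennreal (g1 x) = ennreal (g1 x * indicator {-real (nat \<lceil>\<bar>x\<bar>\<rceil>)..real (nat \<lceil>\<bar>x\<bar>\<rceil>)} x)"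
      by (auto simp: indicator_def) linarith+
    also have "\<dots> \<le> (SUP n::nat. ennreal (g1 x * indicator {-real n..real n} x))"
      by (rule SUP_upper) simp
    finally show "ennreal (g1 x) \<le> (SUP n::nat. ennreal (g1 x * indicator {-real n..real n} x))" .
  qed
  have inc: "incseq (\<lambda>n x. ennreal (g1 x * indicator {-real n..real n} x))"
    by (auto simp: incseq_def le_fun_def indicator_def n1 intro!: ennreal_leI)
  have meas: "(\<lambda>x. ennreal (g1 x * indicator {-real n..real n} x)) \<in> borel_measurable lborel" for n :: nat
    using borel_measurable_times[OF borel_measurable_continuous_onI[OF c1] borel_measurable_indicator] by auto
  have "(\<integral>\<^sup>+x. ennreal (g1 x) \<partial>lborel) = (\<integral>\<^sup>+x. (SUP n::nat. ennreal (g1 x * indicator {-real n..real n} x)) \<partial>lborel)"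
    by (simp add: sup)
  also have "\<dots> = (SUP n::nat. \<integral>\<^sup>+x. ennreal (g1 x * indicator {-real n..real n} x) \<partial>lborel)"
    by (rule nn_integral_monotone_convergence_SUP[OF inc meas])
  also have "\<dots> \<le> RHS" by (rule SUP_least) (rule step)
  finally show ?thesis unfolding RHS_def g1_def g2_def .
qed

theorem theorem2p2:
  fixes M :: "'a measure" and X :: "'a \<Rightarrow> real" and \<beta> :: real and \<phi> :: "real \<Rightarrow> real"
  assumes "prob_space M"
    and "\<beta> > 1/2"
    and "distributed M lborel X (\<lambda>x. ennreal (f_beta \<beta> x))"
    and "smooth_fun \<phi>"
    and "integrable M (\<lambda>\<omega>. (\<phi> (X \<omega>))\<^sup>2)"
  shows "ennreal (prob_space.variance M (\<lambda>\<omega>. \<phi> (X \<omega>)))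
           \<le> ennreal (1 / rho \<beta>) * (\<integral>\<^sup>+ \<omega>. ennreal ((1 + (X \<omega>)\<^sup>2) * (deriv \<phi> (X \<omega>))\<^sup>2) \<partial>M)"
proof -
  interpret P: prob_space M by fact
  note dist = assms(3)
  have d0: "\<phi> differentiable (at x)" for x
    using assms(4) unfolding smooth_fun_def by (metis funpow_0)
  have d1: "deriv \<phi> differentiable (at x)" for x
  proof -
    have "(deriv ^^ 1) \<phi> differentiable (at x)" using assms(4) unfolding smooth_fun_def by blast
    then show ?thesis by simp
  qed
  have der: "(\<phi> has_real_derivative deriv \<phi> x) (at x)" for x
    using d0 DERIV_deriv_iff_real_differentiable by blast
  have dc: "continuous_on UNIV (deriv \<phi>)"
    using d1 by (intro continuous_at_imp_continuous_on ballI differentiable_imp_continuous_within)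
  have \<phi>c: "continuous_on UNIV \<phi>"
    using d0 by (intro continuous_at_imp_continuous_on ballI differentiable_imp_continuous_within)
  define c where "c = \<phi> 0"
  define C where "C = C_beta \<beta>"
  have Cnn: "0 \<le> C" unfolding C_def C_beta_def
    by (simp add: Bochner_Integration.integral_nonneg)
  have Xm: "X \<in> borel_measurable M" using distributed_measurable[OF dist] by simp
  have \<phi>m: "\<phi> \<in> borel_measurable borel" by (rule borel_measurable_continuous_onI[OF \<phi>c])
  have dm: "deriv \<phi> \<in> borel_measurable borel" by (rule borel_measurable_continuous_onI[OF dc])
  have Ym: "(\<lambda>\<omega>. \<phi> (X \<omega>)) \<in> borel_measurable M" using measurable_compose[OF Xm \<phi>m] by (simp add: o_def)
  have int1: "integrable M (\<lambda>\<omega>. \<phi> (X \<omega>))"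
    by (rule P.square_integrable_imp_integrable[OF Ym assms(5)])
  have eq2: "(\<lambda>\<omega>. (\<phi> (X \<omega>) - c)^2) = (\<lambda>\<omega>. (\<phi> (X \<omega>))^2 - 2*c*\<phi> (X \<omega>) + c^2)"
    by (auto simp: power2_diff)
  have int2: "integrable M (\<lambda>\<omega>. (\<phi> (X \<omega>) - c)^2)"
    unfolding eq2 using int1 assms(5) by auto
  have e2: "P.expectation (\<lambda>\<omega>. (\<phi> (X \<omega>) - c)^2) = P.expectation (\<lambda>\<omega>. (\<phi> (X \<omega>))^2) - 2*c*P.expectation (\<lambda>\<omega>. \<phi> (X \<omega>)) + c^2"
    unfolding eq2 using int1 assms(5) by (simp add: P.prob_space)
  have var: "P.variance (\<lambda>\<omega>. \<phi> (X \<omega>)) = P.expectation (\<lambda>\<omega>. (\<phi> (X \<omega>))^2) - (P.expectation (\<lambda>\<omega>. \<phi> (X \<omega>)))^2"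
    by (rule P.variance_eq[OF int1 assms(5)])
  have "0 \<le> (P.expectation (\<lambda>\<omega>. \<phi> (X \<omega>)) - c)^2" by simp
  then have vle: "P.variance (\<lambda>\<omega>. \<phi> (X \<omega>)) \<le> P.expectation (\<lambda>\<omega>. (\<phi> (X \<omega>) - c)^2)"
    unfolding var e2 by (simp add: power2_diff algebra_simps)
  have "ennreal (P.variance (\<lambda>\<omega>. \<phi> (X \<omega>))) \<le> ennreal (P.expectation (\<lambda>\<omega>. (\<phi> (X \<omega>) - c)^2))"
    using vle by (rule ennreal_leI)
  also have "\<dots> = (\<integral>\<^sup>+\<omega>. ennreal ((\<phi> (X \<omega>) - c)^2) \<partial>M)"
    by (rule nn_integral_eq_integral[OF int2, symmetric]) simp
  also have "\<dots> = (\<integral>\<^sup>+x. ennreal (f_beta \<beta> x) * ennreal ((\<phi> x - c)^2) \<partial>lborel)"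
    by (rule distributed_nn_integral[OF dist, symmetric]) (use \<phi>m in measurable)
  also have "\<dots> = (\<integral>\<^sup>+x. ennreal (C * ((1+x^2) powr (-\<beta>) * (\<phi> x - c)^2)) \<partial>lborel)"
    by (intro nn_integral_cong) (simp add: f_beta_def C_def ennreal_mult''[symmetric] mult.assoc)
  also have "\<dots> \<le> ennreal (1 / rho \<beta>) * (\<integral>\<^sup>+x. ennreal (C * ((1+x^2) * (1+x^2) powr (-\<beta>) * (deriv \<phi> x)^2)) \<partial>lborel)"
  proof (rule nn_main[OF assms(2) _ dc _ Cnn])
    show "((\<lambda>x. \<phi> x - c) has_real_derivative deriv \<phi> x) (at x)" for x
      using der[of x] by (auto intro!: derivative_eq_intros)
  qed (simp add: c_def)
  also have "(\<integral>\<^sup>+x. ennreal (C * ((1+x^2) * (1+x^2) powr (-\<beta>) * (deriv \<phi> x)^2)) \<partial>lborel)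
     = (\<integral>\<^sup>+x. ennreal (f_beta \<beta> x) * ennreal ((1+x^2) * (deriv \<phi> x)^2) \<partial>lborel)"
    by (intro nn_integral_cong) (simp add: f_beta_def C_def ennreal_mult''[symmetric] mult_ac)
  also have "\<dots> = (\<integral>\<^sup>+ \<omega>. ennreal ((1 + (X \<omega>)\<^sup>2) * (deriv \<phi> (X \<omega>))\<^sup>2) \<partial>M)"
    by (rule distributed_nn_integral[OF dist]) (use dm in measurable)
  finally show ?thesis .
qed

end
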